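(* Under the hypotheses that $K_1,K_2$ are compact spaces, $G$ is a compact group with Haar probability measure $\lambda$, $f_i\colon K_i\to G$ are continuous surjections and $\mu_i\in P(K_i)$ ($i=1,2$) satisfy $f_i[\mu_i]=\lambda$ with $\{f_i^{-1}[A]:A\in Bor(G)\}$ being $\bigtriangleup$-dense in $Bor(K_i)$ with respect to $\mu_i$, the mapping $\phi\colon G\to P(K_1\times K_2)$, $\phi(y)=\mu_y$, is continuous, where $\mu_y$ denotes the weak$^\ast$ limit of the net $\{\mu_{y,\mathcal E}\}_{\mathcal E\in\mathcal B}$.
   Context: $G=(G,\oplus)$ is a compact Hausdorff group with Haar probability measure $\lambda$; $E\oplus y=\{e\oplus y:e\in E\}$. $\mathcal B$ is the set of finite partitions of $G$ into Borel sets, directed by refinement; $\mathcal E^\ast$ is the set of $E\in\mathcal E$ with $\lambda(E)>0$. $P(X)$ is the space of regular Borel probability measures on a compact space $X$ with the weak$^\ast$ topology; $g[\mu](A)=\mu(g^{-1}[A])$. $\Sigma$ is $\bigtriangleup$-dense in $Bor(K)$ w.r.t. $\mu$ if for every $\varepsilon>0$ and Borel $A$ there is $E\in\Sigma$ with $\mu(A\bigtriangleup E)<\varepsilon$. $\mu_{y,\mathcal E}(D)=\sum_{E\in\mathcal E^\ast}(\mu_1\otimes\mu_2)\big(D\cap(f_1^{-1}[E]\times f_2^{-1}[E\oplus y])\big)/\lambda(E)$ for Borel $D\subseteq K_1\times K_2$ (product measure extended to a regular Borel measure). For each $y\in G$ this net is known to converge weak$^\ast$ to some $\mu_y\in P(K_1\times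 K_2)$. *)

theory Defs
  imports "HOL-Analysis.Analysis" "HOL-Probability.Probability"
begin

definition regular_prob :: "'a::topological_space measure \<Rightarrow> bool" where
  "regular_prob M \<longleftrightarrow> sets M = sets borel \<and> prob_space M \<and>
     (\<forall>A\<in>sets borel.
        emeasure M A = (SUP C\<in>{C. compact C \<and> C \<subseteq> A}. emeasure M C) \<and>
        emeasure M A = (INF U\<in>{U. open U \<and> A \<subseteq> U}. emeasure M U))"

definition rtransl :: "'g::group_add set \<Rightarrow> 'g \<Rightarrow> 'g set" where
  "rtransl E y = (\<lambda>e. e + y) ` E"

definition haar_prob :: "'g::topological_group_add measure \<Rightarrow> bool" where
  "haar_prob lam \<longleftrightarrow> regular_prob lam \<and>
     (\<forall>E\<in>sets borel. \<forall>y. emeasure lam (rtransl E y) = emeasure lam E \<and>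
                          emeasure lam ((\<lambda>e. y + e) ` E) = emeasure lam E)"

definition borel_partitions :: "'g::topological_space set set set" where
  "borel_partitions = {P. finite P \<and> P \<subseteq> sets borel \<and> {} \<notin> P \<and> \<Union>P = UNIV \<and>
       (\<forall>E\<in>P. \<forall>F\<in>P. E \<noteq> F \<longrightarrow> E \<inter> F = {})}"

definition refines :: "'g set set \<Rightarrow> 'g set set \<Rightarrow> bool" where
  "refines Q P \<longleftrightarrow> (\<forall>F\<in>Q. \<exists>E\<in>P. F \<subseteq> E)"

definition partition_net :: "'g::topological_space set set filter" where
  "partition_net = (INF P\<in>borel_partitions. principal {Q\<in>borel_partitions. refines Q P})"

text \<open>The measure \<mu>_{y,E}; nu is the regular Borel extension of \<mu>1 \<otimes> \<mu>2.\<close>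
definition mu_yE :: "'g::group_add measure \<Rightarrow> ('a \<Rightarrow> 'g) \<Rightarrow> ('b \<Rightarrow> 'g) \<Rightarrow>
     ('a::topological_space \<times> 'b::topological_space) measure \<Rightarrow> 'g \<Rightarrow> 'g set set \<Rightarrow> ('a \<times> 'b) measure" where
  "mu_yE lam f1 f2 nu y P = measure_of UNIV (sets borel)
     (\<lambda>D. \<Sum>E\<in>{E\<in>P. measure lam E > 0}.
            emeasure nu (D \<inter> (f1 -` E \<times> f2 -` rtransl E y)) / emeasure lam E)"

definition weak_star_tendsto :: "('i \<Rightarrow> 'x::topological_space measure) \<Rightarrow> 'x measure \<Rightarrow> 'i filter \<Rightarrow> bool" where
  "weak_star_tendsto N M F \<longleftrightarrow>
     (\<forall>h::'x \<Rightarrow> real. continuous_on UNIV h \<longrightarrow>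
        ((\<lambda>i. integral\<^sup>L (N i) h) \<longlongrightarrow> integral\<^sup>L M h) F)"

definition weak_star_continuous :: "('g::topological_space \<Rightarrow> 'x::topological_space measure) \<Rightarrow> bool" where
  "weak_star_continuous phi \<longleftrightarrow>
     (\<forall>h::'x \<Rightarrow> real. continuous_on UNIV h \<longrightarrow> continuous_on UNIV (\<lambda>y. integral\<^sup>L (phi y) h))"

end

theory Submission
  imports Defs
begin



lemma rtransl_vimage: "rtransl (E::'g::group_add set) y = (\<lambda>x. x + - y) -` E"
  unfolding rtransl_def by (force simp: image_iff add.assoc)

lemma mem_rtransl: "x \<in> rtransl (E::'g::group_add set) y \<longleftrightarrow> x + - y \<in> E"
  by (simp add: rtransl_vimage)

lemma rtransl_rtransl: "rtransl (rtransl (E::'g::group_add set) a) b = rtransl E (a + b)"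
proof -
  have "x + - (a + b) = x + - b + - a" for x by (metis add.assoc minus_add)
  then show ?thesis by (auto simp: mem_rtransl)
qed

lemma rtransl_Diff: "rtransl ((E::'g::group_add set) - F) y = rtransl E y - rtransl F y"
  by (auto simp: mem_rtransl)

lemma rtransl_Int: "rtransl ((E::'g::group_add set) \<inter> F) y = rtransl E y \<inter> rtransl F y"
  by (auto simp: mem_rtransl)

lemma rtransl_borel:
  assumes "E \<in> sets borel" shows "rtransl (E::'g::topological_group_add set) y \<in> sets borel"
proof -
  have "(\<lambda>x::'g. x + - y) \<in> borel_measurable borel"
    by (intro borel_measurable_continuous_onI continuous_intros)
  then show ?thesis unfolding rtransl_vimage using assms
    by (metis measurable_sets_borel)
qed

lemma partsD:
  assumes "P \<in> borel_partitions"
  shows "finite P" "P \<subseteq> sets borel" "{} \<notin> P" "\<Union>P = UNIV"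
    "\<And>E F. E \<in> P \<Longrightarrow> F \<in> P \<Longrightarrow> E \<noteq> F \<Longrightarrow> E \<inter> F = {}"
  using assms unfolding borel_partitions_def by auto

lemma parts_ex: "\<And>x. P \<in> borel_partitions \<Longrightarrow> \<exists>E\<in>P. x \<in> E"
  using partsD(4) by blast

lemma ev_refine:
  assumes "P0 \<in> borel_partitions"
  shows "eventually (\<lambda>Q. Q \<in> borel_partitions \<and> Defs.refines Q P0) partition_net"
  unfolding partition_net_def
  by (rule eventually_INF1[OF assms]) (simp add: eventually_principal)

lemma ev_bp: "eventually (\<lambda>Q. Q \<in> (borel_partitions :: 'g::topological_space set set set)) partition_net"
proof -
  have "{UNIV} \<in> (borel_partitions :: 'g set set set)"
    unfolding borel_partitions_def by auto
  from ev_refine[OF this] show ?thesis by (rule eventually_mono) auto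
qed

lemma ev_split:
  assumes "B \<in> sets borel"
  shows "eventually (\<lambda>Q. Q \<in> borel_partitions \<and> (\<forall>E\<in>Q. E \<subseteq> B \<or> E \<subseteq> - B))
     (partition_net :: 'g::topological_space set set filter)"
proof -
  let ?P0 = "{B, - B} - {{}} :: 'g set set"
  have "?P0 \<in> borel_partitions"
    unfolding borel_partitions_def using assms by auto
  from ev_refine[OF this] show ?thesis
    by (rule eventually_mono) (auto simp: Defs.refines_def)
qed

lemma partition_net_nontrivial: "\<not> trivial_limit (partition_net :: 'g::topological_space set set filter)"
proof -
  let ?F = "\<lambda>P. principal {Q\<in>(borel_partitions :: 'g set set set). Defs.refines Q P}"
  have ne: "(borel_partitions :: 'g set set set) \<noteq> {}"
    using ev_bp unfolding borel_partitions_def by (auto intro!: exI[of _ "{UNIV}"])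
  have dir: "\<exists>x\<in>borel_partitions. ?F x \<le> inf (?F a) (?F b)"
    if a: "a \<in> borel_partitions" and b: "b \<in> borel_partitions" for a b
  proof -
    let ?R = "(\<lambda>(E,F). E \<inter> F) ` (a \<times> b) - {{}}"
    have R: "?R \<in> borel_partitions"
      unfolding borel_partitions_def
    proof (intro CollectI conjI)
      show "finite ?R" using partsD(1)[OF a] partsD(1)[OF b] by auto
      show "?R \<subseteq> sets borel" using partsD(2)[OF a] partsD(2)[OF b] by auto
      show "{} \<notin> ?R" by auto
      show "\<Union>?R = UNIV"
      proof (safe)
        fix x :: 'g
        obtain E F where "E \<in> a" "F \<in> b" "x \<in> E" "x \<in> F" using parts_ex[OF a] parts_ex[OF b] by metis
        then show "x \<in> \<Union>?R" by (auto intro!: bexI[of _ "E \<inter> F"])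
      qed auto
      show "\<forall>E\<in>?R. \<forall>F\<in>?R. E \<noteq> F \<longrightarrow> E \<inter> F = {}"
        using partsD(5)[OF a] partsD(5)[OF b] by blast
    qed
    have "Defs.refines Q a \<and> Defs.refines Q b" if "Defs.refines Q ?R" "Q \<in> borel_partitions" for Q
    proof -
      have "\<forall>F\<in>Q. \<exists>E\<in>?R. F \<subseteq> E" using that unfolding Defs.refines_def by auto
      then show ?thesis unfolding Defs.refines_def using partsD(3)[OF that(2)] by fastforce
    qed
    then have "?F ?R \<le> inf (?F a) (?F b)" by auto
    with R show ?thesis by blast
  qed
  have "eventually (\<lambda>_. False) (partition_net :: 'g set set filter) \<longleftrightarrow> (\<exists>b\<in>borel_partitions. eventually (\<lambda>_. False) (?F b))"
    unfolding partition_net_def apply (rule eventually_INF_base[OF ne]) apply (rule dir) apply assumption+ done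
  moreover have "\<not> eventually (\<lambda>_. False) (?F b)" if "b \<in> borel_partitions" for b
  proof -
    have "refines b b" unfolding Defs.refines_def by auto
    with that show ?thesis by (auto simp: eventually_principal)
  qed
  ultimately show ?thesis by (simp add: trivial_limit_def)
qed




lemma borel_Times:
  assumes "A \<in> sets borel" "B \<in> sets borel"
  shows "A \<times> B \<in> sets (borel :: ('a::topological_space \<times> 'b::topological_space) measure)"
proof -
  have f: "fst \<in> borel_measurable (borel :: ('a \<times> 'b) measure)"
    by (intro borel_measurable_continuous_onI continuous_intros)
  have s: "snd \<in> borel_measurable (borel :: ('a \<times> 'b) measure)"
    by (intro borel_measurable_continuous_onI continuous_intros)
  have "A \<times> B = fst -` A \<inter> snd -` B" by auto
  moreover have "fst -` A \<in> sets (borel :: ('a \<times> 'b) measure)" using measurable_sets_borel[OF f assms(1)] .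
  moreover have "snd -` B \<in> sets (borel :: ('a \<times> 'b) measure)" using measurable_sets_borel[OF s assms(2)] .
  ultimately show ?thesis by auto
qed

locale setting =
  fixes lam :: "'g::{topological_group_add, t2_space} measure"
    and f1 :: "'a::t2_space \<Rightarrow> 'g" and f2 :: "'b::t2_space \<Rightarrow> 'g"
    and mu1 :: "'a measure" and mu2 :: "'b measure"
    and nu :: "('a \<times> 'b) measure"
  assumes haar: "haar_prob lam"
    and cf1: "continuous_on UNIV f1" and cf2: "continuous_on UNIV f2"
    and r1: "regular_prob mu1" and r2: "regular_prob mu2"
    and d1: "distr mu1 borel f1 = lam" and d2: "distr mu2 borel f2 = lam"
    and dens1: "\<forall>e>0. \<forall>A\<in>sets borel. \<exists>B\<in>sets (borel :: 'g measure).
           measure mu1 ((A - f1 -` B) \<union> (f1 -` B - A)) < e"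
    and dens2: "\<forall>e>0. \<forall>A\<in>sets borel. \<exists>B\<in>sets (borel :: 'g measure).
           measure mu2 ((A - f2 -` B) \<union> (f2 -` B - A)) < e"
    and rnu: "regular_prob nu"
    and nuprod: "\<forall>D\<in>sets (mu1 \<Otimes>\<^sub>M mu2). emeasure nu D = emeasure (mu1 \<Otimes>\<^sub>M mu2) D"
begin

lemma sets_lam[simp]: "sets lam = sets borel" and space_lam[simp]: "space lam = UNIV"
  and lam_prob: "prob_space lam"
  using haar unfolding haar_prob_def regular_prob_def by (auto dest: sets_eq_imp_space_eq)

lemma sets_mu1[simp]: "sets mu1 = sets borel" and space_mu1[simp]: "space mu1 = UNIV"
  and mu1_prob: "prob_space mu1"
  using r1 unfolding regular_prob_def by (auto dest: sets_eq_imp_space_eq)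

lemma sets_mu2[simp]: "sets mu2 = sets borel" and space_mu2[simp]: "space mu2 = UNIV"
  and mu2_prob: "prob_space mu2"
  using r2 unfolding regular_prob_def by (auto dest: sets_eq_imp_space_eq)

lemma sets_nu[simp]: "sets nu = sets borel" and space_nu[simp]: "space nu = UNIV"
  and nu_prob: "prob_space nu"
  using rnu unfolding regular_prob_def by (auto dest: sets_eq_imp_space_eq)

lemma lam_emeasure_fin: "emeasure lam E = ennreal (measure lam E)"
proof -
  interpret prob_space lam by (rule lam_prob)
  show ?thesis by (rule emeasure_eq_measure)
qed

lemma lam_rtransl: "E \<in> sets borel \<Longrightarrow> measure lam (rtransl E y) = measure lam E"
  using haar unfolding haar_prob_def measure_def by auto

lemma f1_meas: "f1 \<in> borel_measurable borel" using cf1 by (rule borel_measurable_continuous_onI)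
lemma f2_meas: "f2 \<in> borel_measurable borel" using cf2 by (rule borel_measurable_continuous_onI)

lemma f1_vim_borel: "E \<in> sets borel \<Longrightarrow> f1 -` E \<in> sets borel"
  using measurable_sets_borel[OF f1_meas] .
lemma f2_vim_borel: "E \<in> sets borel \<Longrightarrow> f2 -` E \<in> sets borel"
  using measurable_sets_borel[OF f2_meas] .

lemma mu1_vim: assumes "E \<in> sets borel" shows "measure mu1 (f1 -` E) = measure lam E"
proof -
  have "f1 \<in> measurable mu1 borel" using f1_meas by (simp add: measurable_def)
  then have "emeasure lam E = emeasure mu1 (f1 -` E \<inter> space mu1)"
    using emeasure_distr[of f1 mu1 borel E] assms d1 by simp
  then show ?thesis by (simp add: measure_def)
qed

lemma mu2_vim: assumes "E \<in> sets borel" shows "measure mu2 (f2 -` E) = measure lam E"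
proof -
  have "f2 \<in> measurable mu2 borel" using f2_meas by (simp add: measurable_def)
  then have "emeasure lam E = emeasure mu2 (f2 -` E \<inter> space mu2)"
    using emeasure_distr[of f2 mu2 borel E] assms d2 by simp
  then show ?thesis by (simp add: measure_def)
qed

lemma nu_Times:
  assumes "A \<in> sets borel" "B \<in> sets borel"
  shows "measure nu (A \<times> B) = measure mu1 A * measure mu2 B"
proof -
  interpret p2: prob_space mu2 by (rule mu2_prob)
  interpret p1: prob_space mu1 by (rule mu1_prob)
  have "A \<times> B \<in> sets (mu1 \<Otimes>\<^sub>M mu2)" using assms by (intro pair_measureI) auto
  then have "emeasure nu (A \<times> B) = emeasure mu1 A * emeasure mu2 B"
    using nuprod p2.emeasure_pair_measure_Times[of A mu1 B] assms by simp
  then have "ennreal (measure nu (A \<times> B)) = ennreal (measure mu1 A * measure mu2 B)"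
    using finite_measure.emeasure_eq_measure[OF prob_space.finite_measure[OF nu_prob]]
    by (simp add: p1.emeasure_eq_measure p2.emeasure_eq_measure ennreal_mult)
  then show ?thesis by (simp add: zero_le_mult_iff)
qed

definition R :: "'g \<Rightarrow> 'g set \<Rightarrow> ('a \<times> 'b) set" where
  "R y E = f1 -` E \<times> f2 -` rtransl E y"

lemma R_borel: "E \<in> sets borel \<Longrightarrow> R y E \<in> sets borel"
  unfolding R_def by (intro borel_Times f1_vim_borel f2_vim_borel rtransl_borel)

abbreviation "M y P \<equiv> mu_yE lam f1 f2 nu y P"

lemma sets_M[simp]: "sets (M y P) = sets borel" and space_M[simp]: "space (M y P) = UNIV"
  unfolding mu_yE_def by (simp_all add: sets_measure_of_conv sets.sigma_sets_eq[of borel, simplified])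

lemma M_emeasure:
  assumes P: "P \<in> borel_partitions" and D: "D \<in> sets borel"
  shows "emeasure (M y P) D = (\<Sum>E\<in>{E\<in>P. measure lam E > 0}. emeasure nu (D \<inter> R y E) / emeasure lam E)"
proof -
  let ?m = "\<lambda>D. \<Sum>E\<in>{E\<in>P. measure lam E > 0}. emeasure nu (D \<inter> R y E) / emeasure lam E"
  have PB: "E \<in> P \<Longrightarrow> E \<in> sets borel" for E using partsD(2)[OF P] by auto
  have sa: "sigma_algebra UNIV (sets borel)"
    using sets.sigma_algebra_axioms[of borel] by simp
  have pos: "positive (sets borel) ?m" unfolding positive_def by simp
  have ca: "countably_additive (sets borel) ?m"
    unfolding countably_additive_def
  proof (intro allI impI)
    fix A :: "nat \<Rightarrow> ('a \<times> 'b) set"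
    assume A: "range A \<subseteq> sets borel" "disjoint_family A" "\<Union> (range A) \<in> sets borel"
    have "(\<Sum>i. ?m (A i)) = (\<Sum>E\<in>{E\<in>P. measure lam E > 0}. \<Sum>i. emeasure nu (A i \<inter> R y E) / emeasure lam E)"
      by (rule suminf_sum) (rule summableI)
    also have "\<dots> = (\<Sum>E\<in>{E\<in>P. measure lam E > 0}. (\<Sum>i. emeasure nu (A i \<inter> R y E)) / emeasure lam E)"
      by (simp add: divide_ennreal_def)
    also have "\<dots> = ?m (\<Union> (range A))"
    proof (rule sum.cong[OF refl])
      fix E assume "E \<in> {E\<in>P. measure lam E > 0}"
      then have RB: "R y E \<in> sets borel" using PB R_borel by auto
      have "(\<Sum>i. emeasure nu (A i \<inter> R y E)) = emeasure nu (\<Union>i. A i \<inter> R y E)"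
        using A RB by (intro suminf_emeasure) (auto simp: disjoint_family_on_def)
      then show "(\<Sum>i. emeasure nu (A i \<inter> R y E)) / emeasure lam E = emeasure nu (\<Union> (range A) \<inter> R y E) / emeasure lam E"
        by simp
    qed
    finally show "(\<Sum>i. ?m (A i)) = ?m (\<Union> (range A))" .
  qed
  have "emeasure (measure_of UNIV (sets borel) ?m) D = ?m D"
    by (rule emeasure_measure_of_sigma[OF sa pos ca D])
  then show ?thesis unfolding mu_yE_def R_def .
qed

lemma M_measure:
  assumes P: "P \<in> borel_partitions" and D: "D \<in> sets borel"
  shows "measure (M y P) D = (\<Sum>E\<in>{E\<in>P. measure lam E > 0}. measure nu (D \<inter> R y E) / measure lam E)"
    and "emeasure (M y P) D = ennreal (\<Sum>E\<in>{E\<in>P. measure lam E > 0}. measure nu (D \<inter> R y E) / measure lam E)"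
proof -
  interpret pn: prob_space nu by (rule nu_prob)
  have "emeasure (M y P) D = (\<Sum>E\<in>{E\<in>P. measure lam E > 0}. ennreal (measure nu (D \<inter> R y E) / measure lam E))"
    unfolding M_emeasure[OF assms]
    proof (rule sum.cong[OF refl])
      fix E assume "E \<in> {E\<in>P. measure lam E > 0}"
      then show "emeasure nu (D \<inter> R y E) / emeasure lam E = ennreal (measure nu (D \<inter> R y E) / measure lam E)"
        unfolding pn.emeasure_eq_measure lam_emeasure_fin by (intro divide_ennreal) auto
    qed
  also have "\<dots> = ennreal (\<Sum>E\<in>{E\<in>P. measure lam E > 0}. measure nu (D \<inter> R y E) / measure lam E)"
    by (rule sum_ennreal) (intro divide_nonneg_nonneg measure_nonneg)
  finally show e: "emeasure (M y P) D = ennreal (\<Sum>E\<in>{E\<in>P. measure lam E > 0}. measure nu (D \<inter> R y E) / measure lam E)" .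
  show "measure (M y P) D = (\<Sum>E\<in>{E\<in>P. measure lam E > 0}. measure nu (D \<inter> R y E) / measure lam E)"
  proof -
    have "measure (M y P) D = enn2real (emeasure (M y P) D)" by (rule measure_def)
    also have "\<dots> = (\<Sum>E\<in>{E\<in>P. measure lam E > 0}. measure nu (D \<inter> R y E) / measure lam E)"
      unfolding e by (rule enn2real_ennreal) (intro sum_nonneg divide_nonneg_nonneg measure_nonneg)
    finally show ?thesis .
  qed
qed

lemma M_finite: assumes "P \<in> borel_partitions" shows "finite_measure (M y P)"
proof (rule finite_measureI)
  have "UNIV \<in> sets (borel::('a\<times>'b) measure)" by simp
  from M_measure(2)[OF assms this, of y]
  show "emeasure (M y P) (space (M y P)) \<noteq> \<infinity>" unfolding space_M by simp
qed

end


lemma borel_UNIV: "UNIV \<in> sets borel" by simp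

context setting begin

definition "Pp P = {E\<in>P. measure lam E > 0}"

lemma M_rect:
  assumes P: "P \<in> borel_partitions" and X: "X \<in> sets borel" and Y: "Y \<in> sets borel"
  shows "measure (M y P) (X \<times> Y) = (\<Sum>E\<in>Pp P. measure mu1 (X \<inter> f1 -` E) * measure mu2 (Y \<inter> f2 -` rtransl E y) / measure lam E)"
  unfolding M_measure(1)[OF P borel_Times[OF X Y]] Pp_def
proof (rule sum.cong[OF refl])
  fix E assume "E \<in> {E\<in>P. measure lam E > 0}"
  then have E: "E \<in> sets borel" using partsD(2)[OF P] by auto
  have "(X \<times> Y) \<inter> R y E = (X \<inter> f1 -` E) \<times> (Y \<inter> f2 -` rtransl E y)" unfolding R_def by auto
  moreover have "measure nu ((X \<inter> f1 -` E) \<times> (Y \<inter> f2 -` rtransl E y))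
      = measure mu1 (X \<inter> f1 -` E) * measure mu2 (Y \<inter> f2 -` rtransl E y)"
    using X Y E by (intro nu_Times sets.Int f1_vim_borel f2_vim_borel rtransl_borel) auto
  ultimately show "measure nu ((X \<times> Y) \<inter> R y E) / measure lam E =
      measure mu1 (X \<inter> f1 -` E) * measure mu2 (Y \<inter> f2 -` rtransl E y) / measure lam E" by simp
qed

lemma Pp_sub: "Pp P \<subseteq> P" unfolding Pp_def by auto
lemma Pp_pos: "E \<in> Pp P \<Longrightarrow> measure lam E > 0" unfolding Pp_def by auto
lemma Pp_fin: "P \<in> borel_partitions \<Longrightarrow> finite (Pp P)" using partsD(1) Pp_sub finite_subset by metis
lemma Pp_borel: "P \<in> borel_partitions \<Longrightarrow> E \<in> Pp P \<Longrightarrow> E \<in> sets borel" using partsD(2) Pp_sub by blast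

lemma M_marg1:
  assumes P: "P \<in> borel_partitions" and X: "X \<in> sets borel"
  shows "measure (M y P) (X \<times> UNIV) \<le> measure mu1 X"
proof -
  interpret p1: prob_space mu1 by (rule mu1_prob)
  have "measure (M y P) (X \<times> UNIV) = (\<Sum>E\<in>Pp P. measure mu1 (X \<inter> f1 -` E))"
    unfolding M_rect[OF P X borel_UNIV]
  proof (rule sum.cong[OF refl])
    fix E assume E: "E \<in> Pp P"
    have "measure mu2 (UNIV \<inter> f2 -` rtransl E y) = measure lam E"
      using mu2_vim[OF rtransl_borel[OF Pp_borel[OF P E]]] lam_rtransl[OF Pp_borel[OF P E]] by simp
    then show "measure mu1 (X \<inter> f1 -` E) * measure mu2 (UNIV \<inter> f2 -` rtransl E y) / measure lam E = measure mu1 (X \<inter> f1 -` E)"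
      using Pp_pos[OF E] by simp
  qed
  also have "\<dots> = measure mu1 (\<Union>E\<in>Pp P. X \<inter> f1 -` E)"
  proof (rule p1.finite_measure_finite_Union[symmetric])
    show "finite (Pp P)" by (rule Pp_fin[OF P])
    show "(\<lambda>E. X \<inter> f1 -` E) ` Pp P \<subseteq> sets mu1"
      using X Pp_borel[OF P] f1_vim_borel by auto
    show "disjoint_family_on (\<lambda>E. X \<inter> f1 -` E) (Pp P)"
      unfolding disjoint_family_on_def using partsD(5)[OF P] Pp_sub by blast
  qed
  also have "\<dots> \<le> measure mu1 X"
    by (rule p1.finite_measure_mono) (use X in auto)
  finally show ?thesis .
qed

lemma M_marg2:
  assumes P: "P \<in> borel_partitions" and Y: "Y \<in> sets borel"
  shows "measure (M y P) (UNIV \<times> Y) \<le> measure mu2 Y"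
proof -
  interpret p2: prob_space mu2 by (rule mu2_prob)
  have "measure (M y P) (UNIV \<times> Y) = (\<Sum>E\<in>Pp P. measure mu2 (Y \<inter> f2 -` rtransl E y))"
    unfolding M_rect[OF P borel_UNIV Y]
  proof (rule sum.cong[OF refl])
    fix E assume E: "E \<in> Pp P"
    have "measure mu1 (UNIV \<inter> f1 -` E) = measure lam E"
      using mu1_vim[OF Pp_borel[OF P E]] by simp
    then show "measure mu1 (UNIV \<inter> f1 -` E) * measure mu2 (Y \<inter> f2 -` rtransl E y) / measure lam E = measure mu2 (Y \<inter> f2 -` rtransl E y)"
      using Pp_pos[OF E] by simp
  qed
  also have "\<dots> = measure mu2 (\<Union>E\<in>Pp P. Y \<inter> f2 -` rtransl E y)"
  proof (rule p2.finite_measure_finite_Union[symmetric])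
    show "finite (Pp P)" by (rule Pp_fin[OF P])
    show "(\<lambda>E. Y \<inter> f2 -` rtransl E y) ` Pp P \<subseteq> sets mu2"
      using Y Pp_borel[OF P] by (auto intro!: sets.Int f2_vim_borel rtransl_borel)
    have "rtransl E y \<inter> rtransl F y = {}" if "E \<in> P" "F \<in> P" "E \<noteq> F" for E F
      using partsD(5)[OF P that] rtransl_Int[of E F y] by (auto simp: mem_rtransl)
    then show "disjoint_family_on (\<lambda>E. Y \<inter> f2 -` rtransl E y) (Pp P)"
      unfolding disjoint_family_on_def using Pp_sub by blast
  qed
  also have "\<dots> \<le> measure mu2 Y"
    by (rule p2.finite_measure_mono) (use Y in auto)
  finally show ?thesis .
qed

lemma M_total:
  assumes P: "P \<in> borel_partitions"
  shows "measure (M y P) UNIV \<le> 1"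
proof -
  interpret p1: prob_space mu1 by (rule mu1_prob)
  have "measure (M y P) (UNIV \<times> UNIV) \<le> measure mu1 UNIV"
    by (rule M_marg1[OF P]) simp
  then show ?thesis using p1.prob_space by simp
qed

end



lemma cont_from_eps:
  fixes T :: "'g::t2_space \<Rightarrow> real"
  assumes "\<And>y0 e. e > 0 \<Longrightarrow> eventually (\<lambda>y. \<bar>T y - T y0\<bar> < e) (at y0)"
  shows "continuous_on UNIV T"
proof -
  have "isCont T y0" for y0 unfolding continuous_at tendsto_iff dist_real_def
    using assms by blast
  then show ?thesis by (simp add: continuous_at_imp_continuous_on)
qed

lemma fm_subadd: "finite_measure M \<Longrightarrow> A \<in> sets M \<Longrightarrow> B \<in> sets M \<Longrightarrow> measure M (A \<union> B) \<le> measure M A + measure M B"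
  by (intro measure_subadditive) (simp_all add: finite_measure.emeasure_finite)

lemma compact_nbhd:
  fixes C U :: "'g::topological_group_add set"
  assumes C: "compact C" and U: "open U" and CU: "C \<subseteq> U"
  shows "\<exists>W. open W \<and> 0 \<in> W \<and> (\<forall>d\<in>W. rtransl C d \<subseteq> U)"
proof -
  let ?S = "(\<lambda>p::'g\<times>'g. fst p + snd p) -` U"
  have "continuous_on UNIV (\<lambda>p::'g\<times>'g. fst p + snd p)" by (intro continuous_intros)
  then have S: "open ?S" using U continuous_on_open_vimage[OF open_UNIV] by auto
  have "\<forall>c\<in>C. \<exists>V W. open V \<and> open W \<and> (c, 0) \<in> V \<times> W \<and> V \<times> W \<subseteq> ?S"
  proof
    fix c assume "c \<in> C"
    then have "(c, 0) \<in> ?S" using CU by auto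
    from open_prod_elim[OF S this] show "\<exists>V W. open V \<and> open W \<and> (c, 0) \<in> V \<times> W \<and> V \<times> W \<subseteq> ?S"
      by metis
  qed
  then obtain V W where VW: "\<And>c. c \<in> C \<Longrightarrow> open (V c) \<and> open (W c) \<and> (c, 0) \<in> V c \<times> W c \<and> V c \<times> W c \<subseteq> ?S"
    by metis
  have "C \<subseteq> (\<Union>c\<in>C. V c)" using VW by auto
  then obtain D where D: "D \<subseteq> C" "finite D" "C \<subseteq> (\<Union>c\<in>D. V c)"
    using compactE_image[OF C, of C V] VW by metis
  let ?W = "\<Inter>c\<in>D. W c"
  have "open ?W" using D VW by (intro open_INT) auto
  moreover have "0 \<in> ?W" using D VW by auto
  moreover have "rtransl C d \<subseteq> U" if d: "d \<in> ?W" for d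
  proof
    fix z assume "z \<in> rtransl C d"
    then obtain x where x: "x \<in> C" "z = x + d" unfolding rtransl_def by auto
    then obtain c where c: "c \<in> D" "x \<in> V c" using D by auto
    then have "(x, d) \<in> V c \<times> W c" using d by auto
    moreover have "V c \<times> W c \<subseteq> ?S" using VW[of c] c D by auto
    ultimately have "(x, d) \<in> ?S" by blast
    then show "z \<in> U" using x by simp
  qed
  ultimately show ?thesis by blast
qed

context setting begin

lemma inner_approx:
  assumes B: "B \<in> sets borel" and e: "e > 0"
  shows "\<exists>C. compact C \<and> C \<subseteq> B \<and> measure lam B < measure lam C + e"
proof (rule ccontr)
  assume "\<not> ?thesis"
  then have H: "\<And>C. compact C \<Longrightarrow> C \<subseteq> B \<Longrightarrow> measure lam C + e \<le> measure lam B"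
    by (meson not_less)
  have eB: "e \<le> measure lam B" using H[of "{}"] by simp
  have reg: "emeasure lam B = (SUP C\<in>{C. compact C \<and> C \<subseteq> B}. emeasure lam C)"
    using haar B unfolding haar_prob_def regular_prob_def by blast
  have "(SUP C\<in>{C. compact C \<and> C \<subseteq> B}. emeasure lam C) \<le> ennreal (measure lam B - e)"
  proof (rule SUP_least)
    fix C assume "C \<in> {C. compact C \<and> C \<subseteq> B}"
    then have "measure lam C \<le> measure lam B - e" using H by fastforce
    then show "emeasure lam C \<le> ennreal (measure lam B - e)"
      unfolding lam_emeasure_fin by (rule ennreal_leI)
  qed
  moreover have reg': "ennreal (measure lam B) = (SUP C\<in>{C. compact C \<and> C \<subseteq> B}. ennreal (measure lam C))"
    using reg unfolding lam_emeasure_fin .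
  ultimately have "ennreal (measure lam B) \<le> ennreal (measure lam B - e)"
    unfolding lam_emeasure_fin by (metis ord_eq_le_trans)
  then have "measure lam B \<le> measure lam B - e" using eB by (subst (asm) ennreal_le_iff) auto
  then show False using e by simp
qed

lemma outer_approx:
  assumes B: "B \<in> sets borel" and e: "e > 0"
  shows "\<exists>U. open U \<and> B \<subseteq> U \<and> measure lam U < measure lam B + e"
proof (rule ccontr)
  assume "\<not> ?thesis"
  then have H: "\<And>U. open U \<Longrightarrow> B \<subseteq> U \<Longrightarrow> measure lam B + e \<le> measure lam U"
    by (meson not_less)
  have reg: "emeasure lam B = (INF U\<in>{U. open U \<and> B \<subseteq> U}. emeasure lam U)"
    using haar B unfolding haar_prob_def regular_prob_def by blast
  have "ennreal (measure lam B + e) \<le> (INF U\<in>{U. open U \<and> B \<subseteq> U}. emeasure lam U)"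
  proof (rule INF_greatest)
    fix U assume "U \<in> {U. open U \<and> B \<subseteq> U}"
    then have "measure lam B + e \<le> measure lam U" using H by fastforce
    then show "ennreal (measure lam B + e) \<le> emeasure lam U"
      unfolding lam_emeasure_fin by (rule ennreal_leI)
  qed
  moreover have reg': "ennreal (measure lam B) = (INF U\<in>{U. open U \<and> B \<subseteq> U}. ennreal (measure lam U))"
    using reg unfolding lam_emeasure_fin .
  ultimately have "ennreal (measure lam B + e) \<le> ennreal (measure lam B)"
    unfolding lam_emeasure_fin by (metis ord_le_eq_trans)
  then have "measure lam B + e \<le> measure lam B" by (subst (asm) ennreal_le_iff) auto
  then show False using e by simp
qed

lemma transl_small:
  assumes B: "B \<in> sets borel" and e: "e > 0"
  shows "\<exists>W. open W \<and> 0 \<in> W \<and> (\<forall>d\<in>W. measure lam (rtransl B d - B) < e)"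
proof -
  interpret pl: prob_space lam by (rule lam_prob)
  obtain C where C: "compact C" "C \<subseteq> B" "measure lam B < measure lam C + e/3"
    using inner_approx[OF B, of "e/3"] e by auto
  obtain U where U: "open U" "B \<subseteq> U" "measure lam U < measure lam B + e/3"
    using outer_approx[OF B, of "e/3"] e by auto
  have Cb: "C \<in> sets borel" using C(1) by (intro borel_closed compact_imp_closed)
  have Ub: "U \<in> sets borel" using U(1) by (rule borel_open)
  obtain W where W: "open W" "0 \<in> W" "\<And>d. d \<in> W \<Longrightarrow> rtransl C d \<subseteq> U"
  proof -
    have "C \<subseteq> U" using C(2) U(2) by auto
    from compact_nbhd[OF C(1) U(1) this] show ?thesis using that by auto
  qed
  have "measure lam (rtransl B d - B) < e" if d: "d \<in> W" for d
  proof -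
    have sub: "rtransl B d - B \<subseteq> (U - C) \<union> rtransl (B - C) d"
    proof
      fix z assume z: "z \<in> rtransl B d - B"
      then obtain b where b: "b \<in> B" "z = b + d" unfolding rtransl_def by auto
      show "z \<in> (U - C) \<union> rtransl (B - C) d"
      proof (cases "b \<in> C")
        case True
        then have "z \<in> rtransl C d" using b unfolding rtransl_def by auto
        then have "z \<in> U" using W(3)[OF d] by auto
        moreover have "z \<notin> C" using z C(2) by auto
        ultimately show ?thesis by auto
      next
        case False
        then show ?thesis using b unfolding rtransl_def by auto
      qed
    qed
    have BC: "B - C \<in> sets borel" using B Cb by auto
    have "measure lam (rtransl B d - B) \<le> measure lam ((U - C) \<union> rtransl (B - C) d)"
      using sub Ub Cb rtransl_borel[OF BC, of d] by (intro pl.finite_measure_mono) auto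
    also have "\<dots> \<le> measure lam (U - C) + measure lam (rtransl (B - C) d)"
      using Ub Cb rtransl_borel[OF BC, of d] by (intro fm_subadd pl.finite_measure_axioms) auto
    also have "measure lam (rtransl (B - C) d) = measure lam (B - C)"
      using lam_rtransl[OF BC] .
    also have "measure lam (U - C) = measure lam U - measure lam C"
      using Ub Cb C(2) U(2) by (intro pl.finite_measure_Diff) auto
    also have "measure lam (B - C) = measure lam B - measure lam C"
      using B Cb C(2) by (intro pl.finite_measure_Diff) auto
    finally show ?thesis using C(3) U(3) by linarith
  qed
  then show ?thesis using W by blast
qed

lemma transl_cont:
  assumes B: "B \<in> sets borel" and B': "B' \<in> sets borel"
  shows "continuous_on UNIV (\<lambda>y. measure lam (B' \<inter> rtransl B y))"
proof (rule cont_from_eps)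
  interpret pl: prob_space lam by (rule lam_prob)
  fix y0 :: 'g and e :: real assume e: "e > 0"
  obtain W where W: "open W" "0 \<in> W" "\<And>d. d \<in> W \<Longrightarrow> measure lam (rtransl B d - B) < e"
    using transl_small[OF B e] by blast
  have "((\<lambda>y. y + - y0) \<longlongrightarrow> y0 + - y0) (at y0)" by (intro tendsto_intros)
  then have "eventually (\<lambda>y. y + - y0 \<in> W) (at y0)"
    using W by (intro topological_tendstoD) auto
  then show "eventually (\<lambda>y. \<bar>measure lam (B' \<inter> rtransl B y) - measure lam (B' \<inter> rtransl B y0)\<bar> < e) (at y0)"
  proof (rule eventually_mono)
    fix y assume "y + - y0 \<in> W"
    define d where "d = y + - y0"
    have dW: "d \<in> W" using \<open>y + - y0 \<in> W\<close> d_def by simp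
    have Bd: "rtransl B d \<in> sets borel" using B by (rule rtransl_borel)
    have ry: "rtransl B y = rtransl (rtransl B d) y0"
      unfolding rtransl_rtransl d_def by (simp add: add.assoc)
    have m1: "measure lam (rtransl B y - rtransl B y0) = measure lam (rtransl B d - B)"
      unfolding ry rtransl_Diff[symmetric] using Bd B by (intro lam_rtransl) auto
    have m2: "measure lam (rtransl B y0 - rtransl B y) = measure lam (B - rtransl B d)"
      unfolding ry rtransl_Diff[symmetric] using Bd B by (intro lam_rtransl) auto
    have m3: "measure lam (B - rtransl B d) = measure lam (rtransl B d - B)"
    proof -
      have "measure lam (B - rtransl B d) = measure lam B - measure lam (B \<inter> rtransl B d)"
        using B Bd by (intro pl.finite_measure_Diff') auto
      also have "\<dots> = measure lam (rtransl B d) - measure lam (rtransl B d \<inter> B)"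
        using lam_rtransl[OF B] by (simp add: Int_commute)
      also have "\<dots> = measure lam (rtransl B d - B)"
        using B Bd by (intro pl.finite_measure_Diff'[symmetric]) auto
      finally show ?thesis .
    qed
    have gen: "measure lam (B' \<inter> X) \<le> measure lam (B' \<inter> Y) + measure lam (X - Y)"
      if "X \<in> sets borel" "Y \<in> sets borel" for X Y
    proof -
      have "measure lam (B' \<inter> X) \<le> measure lam ((B' \<inter> Y) \<union> (X - Y))"
        using that B' by (intro pl.finite_measure_mono) auto
      also have "\<dots> \<le> measure lam (B' \<inter> Y) + measure lam (X - Y)"
        using that B' by (intro fm_subadd pl.finite_measure_axioms) auto
      finally show ?thesis .
    qed
    have r1: "rtransl B y \<in> sets borel" "rtransl B y0 \<in> sets borel" using B by (auto intro: rtransl_borel)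
    have "measure lam (rtransl B d - B) < e" using W(3)[OF dW] .
    then show "\<bar>measure lam (B' \<inter> rtransl B y) - measure lam (B' \<inter> rtransl B y0)\<bar> < e"
      using gen[OF r1(1) r1(2)] gen[OF r1(2) r1(1)] m1 m2 m3 by linarith
  qed
qed

end


context setting begin

lemma M_fm_subadd:
  assumes "P \<in> borel_partitions" "X \<in> sets borel" "Y \<in> sets borel"
  shows "measure (M y P) (X \<union> Y) \<le> measure (M y P) X + measure (M y P) Y"
  using assms by (intro fm_subadd M_finite) auto

lemma M_mono:
  assumes "P \<in> borel_partitions" "X \<subseteq> Y" "Y \<in> sets borel"
  shows "measure (M y P) X \<le> measure (M y P) Y"
  using assms finite_measure.finite_measure_mono[OF M_finite[OF assms(1)]] by auto

lemma M_perturb: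
  assumes P: "P \<in> borel_partitions"
    and A: "A \<in> sets borel" and A': "A' \<in> sets borel"
    and B: "B \<in> sets borel" and B': "B' \<in> sets borel"
    and X: "X \<in> sets borel" and Y: "Y \<in> sets borel"
    and sub: "A \<times> A' \<subseteq> B \<times> B' \<union> (X \<times> UNIV) \<union> (UNIV \<times> Y)"
  shows "measure (M y P) (A \<times> A') \<le> measure (M y P) (B \<times> B') + measure mu1 X + measure mu2 Y"
proof -
  have b1: "B \<times> B' \<in> sets borel" using B B' by (rule borel_Times)
  have b2: "X \<times> UNIV \<in> sets borel" using X borel_UNIV by (rule borel_Times)
  have b3: "UNIV \<times> Y \<in> sets borel" using borel_UNIV Y by (rule borel_Times)
  have "measure (M y P) (A \<times> A') \<le> measure (M y P) (B \<times> B' \<union> (X \<times> UNIV) \<union> (UNIV \<times> Y))"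
    using sub b1 b2 b3 by (intro M_mono[OF P]) auto
  also have "\<dots> \<le> measure (M y P) (B \<times> B' \<union> (X \<times> UNIV)) + measure (M y P) (UNIV \<times> Y)"
    using b1 b2 b3 by (intro M_fm_subadd[OF P]) auto
  also have "measure (M y P) (B \<times> B' \<union> (X \<times> UNIV)) \<le> measure (M y P) (B \<times> B') + measure (M y P) (X \<times> UNIV)"
    using b1 b2 by (intro M_fm_subadd[OF P]) auto
  finally show ?thesis using M_marg1[OF P X, of y] M_marg2[OF P Y, of y] by linarith
qed

lemma M_split_rect:
  assumes P: "P \<in> borel_partitions" and split: "\<forall>E\<in>P. E \<subseteq> B \<or> E \<subseteq> - B"
    and B: "B \<in> sets borel" and B': "B' \<in> sets borel"
  shows "measure (M y P) (f1 -` B \<times> f2 -` B') = measure lam (B' \<inter> rtransl B y)"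
proof -
  interpret pl: prob_space lam by (rule lam_prob)
  have PB: "E \<in> P \<Longrightarrow> E \<in> sets borel" for E using partsD(2)[OF P] by auto
  let ?g = "\<lambda>E. if E \<subseteq> B then measure lam (B' \<inter> rtransl E y) else 0"
  have "measure (M y P) (f1 -` B \<times> f2 -` B') = (\<Sum>E\<in>Pp P. ?g E)"
    unfolding M_rect[OF P f1_vim_borel[OF B] f2_vim_borel[OF B']]
  proof (rule sum.cong[OF refl])
    fix E assume E: "E \<in> Pp P"
    then have Eb: "E \<in> sets borel" and EP: "E \<in> P" using Pp_borel[OF P] Pp_sub by auto
    have pos: "measure lam E > 0" using Pp_pos[OF E] .
    have m2: "measure mu2 (f2 -` B' \<inter> f2 -` rtransl E y) = measure lam (B' \<inter> rtransl E y)"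
      using mu2_vim[of "B' \<inter> rtransl E y"] B' rtransl_borel[OF Eb, of y] by (simp add: vimage_Int)
    show "measure mu1 (f1 -` B \<inter> f1 -` E) * measure mu2 (f2 -` B' \<inter> f2 -` rtransl E y) / measure lam E = ?g E"
    proof (cases "E \<subseteq> B")
      case True
      then have "f1 -` B \<inter> f1 -` E = f1 -` E" by auto
      then show ?thesis using True m2 mu1_vim[OF Eb] pos by simp
    next
      case False
      then have "E \<subseteq> - B" using split EP by auto
      then have "f1 -` B \<inter> f1 -` E = {}" by auto
      then show ?thesis using False by simp
    qed
  qed
  also have "\<dots> = (\<Sum>E\<in>P. ?g E)"
  proof (rule sum.mono_neutral_left)
    show "finite P" by (rule partsD(1)[OF P])
    show "Pp P \<subseteq> P" by (rule Pp_sub)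
    show "\<forall>E\<in>P - Pp P. ?g E = 0"
    proof
      fix E assume E: "E \<in> P - Pp P"
      then have Eb: "E \<in> sets borel" using PB by auto
      have "measure lam E = 0" using E unfolding Pp_def using measure_nonneg[of lam E] by auto
      moreover have "measure lam (B' \<inter> rtransl E y) \<le> measure lam (rtransl E y)"
        using rtransl_borel[OF Eb, of y] by (intro pl.finite_measure_mono) auto
      ultimately have "measure lam (B' \<inter> rtransl E y) = 0"
        using lam_rtransl[OF Eb, of y] measure_nonneg[of lam "B' \<inter> rtransl E y"] by linarith
      then show "?g E = 0" by simp
    qed
  qed
  also have "\<dots> = (\<Sum>E\<in>{E\<in>P. E \<subseteq> B}. measure lam (B' \<inter> rtransl E y))"
    by (rule sum.inter_filter[symmetric]) (rule partsD(1)[OF P])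
  also have "\<dots> = measure lam (\<Union>E\<in>{E\<in>P. E \<subseteq> B}. B' \<inter> rtransl E y)"
  proof (rule pl.finite_measure_finite_Union[symmetric])
    show "finite {E\<in>P. E \<subseteq> B}" using partsD(1)[OF P] by auto
    show "(\<lambda>E. B' \<inter> rtransl E y) ` {E\<in>P. E \<subseteq> B} \<subseteq> sets lam"
      using B' PB by (auto intro!: sets.Int rtransl_borel)
    have "rtransl E y \<inter> rtransl F y = {}" if "E \<in> P" "F \<in> P" "E \<noteq> F" for E F
      using partsD(5)[OF P that] rtransl_Int[of E F y] by (auto simp: mem_rtransl)
    then show "disjoint_family_on (\<lambda>E. B' \<inter> rtransl E y) {E\<in>P. E \<subseteq> B}"
      unfolding disjoint_family_on_def by blast
  qed
  also have "(\<Union>E\<in>{E\<in>P. E \<subseteq> B}. B' \<inter> rtransl E y) = B' \<inter> rtransl B y"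
  proof (intro equalityI subsetI)
    fix x assume "x \<in> (\<Union>E\<in>{E\<in>P. E \<subseteq> B}. B' \<inter> rtransl E y)"
    then show "x \<in> B' \<inter> rtransl B y" by (auto simp: mem_rtransl)
  next
    fix x assume x: "x \<in> B' \<inter> rtransl B y"
    obtain E where E: "E \<in> P" "x + - y \<in> E" using parts_ex[OF P] by blast
    then have "E \<subseteq> B" using split x by (auto simp: mem_rtransl)
    then show "x \<in> (\<Union>E\<in>{E\<in>P. E \<subseteq> B}. B' \<inter> rtransl E y)"
      using E x by (auto simp: mem_rtransl)
  qed
  finally show ?thesis .
qed

lemma rect_lim:
  assumes A: "A \<in> sets borel" and A': "A' \<in> sets borel" and d: "\<delta> > 0"
  shows "\<exists>T. continuous_on UNIV T \<and> (\<forall>y. eventually (\<lambda>P. P \<in> borel_partitions \<and>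
      \<bar>measure (M y P) (A \<times> A') - T y\<bar> \<le> \<delta>) partition_net)"
proof -
  obtain B where B: "B \<in> sets borel" "measure mu1 ((A - f1 -` B) \<union> (f1 -` B - A)) < \<delta>/2"
    using dens1 d A by (meson half_gt_zero)
  obtain B' where B': "B' \<in> sets borel" "measure mu2 ((A' - f2 -` B') \<union> (f2 -` B' - A')) < \<delta>/2"
    using dens2 d A' by (meson half_gt_zero)
  define X where "X = (A - f1 -` B) \<union> (f1 -` B - A)"
  define Y where "Y = (A' - f2 -` B') \<union> (f2 -` B' - A')"
  have Xb: "X \<in> sets borel" unfolding X_def using A f1_vim_borel[OF B(1)] by auto
  have Yb: "Y \<in> sets borel" unfolding Y_def using A' f2_vim_borel[OF B'(1)] by auto
  have fB: "f1 -` B \<in> sets borel" "f2 -` B' \<in> sets borel"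
    using f1_vim_borel[OF B(1)] f2_vim_borel[OF B'(1)] .
  let ?T = "\<lambda>y. measure lam (B' \<inter> rtransl B y)"
  have "eventually (\<lambda>P. P \<in> borel_partitions \<and> \<bar>measure (M y P) (A \<times> A') - ?T y\<bar> \<le> \<delta>) partition_net" for y
    using ev_split[OF B(1)]
  proof (rule eventually_mono)
    fix P assume P: "P \<in> borel_partitions \<and> (\<forall>E\<in>P. E \<subseteq> B \<or> E \<subseteq> - B)"
    have k1: "measure (M y P) (f1 -` B \<times> f2 -` B') = ?T y"
      using M_split_rect[OF conjunct1[OF P] conjunct2[OF P] B(1) B'(1)] .
    have s1: "A \<times> A' \<subseteq> f1 -` B \<times> f2 -` B' \<union> (X \<times> UNIV) \<union> (UNIV \<times> Y)"
      unfolding X_def Y_def by auto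
    have s2: "f1 -` B \<times> f2 -` B' \<subseteq> A \<times> A' \<union> (X \<times> UNIV) \<union> (UNIV \<times> Y)"
      unfolding X_def Y_def by auto
    have i1: "measure (M y P) (A \<times> A') \<le> measure (M y P) (f1 -` B \<times> f2 -` B') + measure mu1 X + measure mu2 Y"
      by (rule M_perturb[OF conjunct1[OF P] A A' fB Xb Yb s1])
    have i2: "measure (M y P) (f1 -` B \<times> f2 -` B') \<le> measure (M y P) (A \<times> A') + measure mu1 X + measure mu2 Y"
      by (rule M_perturb[OF conjunct1[OF P] fB A A' Xb Yb s2])
    show "P \<in> borel_partitions \<and> \<bar>measure (M y P) (A \<times> A') - ?T y\<bar> \<le> \<delta>"
      using P k1 i1 i2 B(2) B'(2) unfolding X_def[symmetric] Y_def[symmetric] by linarith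
  qed
  moreover have "continuous_on UNIV ?T" by (rule transl_cont[OF B(1) B'(1)])
  ultimately show ?thesis by blast
qed

end



lemma rect_approx:
  fixes h :: "'a::topological_space \<times> 'b::topological_space \<Rightarrow> real"
  assumes cpt: "compact (UNIV :: ('a \<times> 'b) set)" and h: "continuous_on UNIV h" and e: "e > 0"
  shows "\<exists>K A A' c. finite (K :: (('a\<times>'b) set \<times> ('a\<times>'b) set) set) \<and>
     (\<forall>k\<in>K. A k \<in> sets borel \<and> A' k \<in> sets borel) \<and>
     (\<forall>z. \<bar>h z - (\<Sum>k\<in>K. c k * indicator (A k \<times> A' k) z)\<bar> \<le> e)"
proof -
  define Ob where "Ob z = h -` ball (h z) e" for z
  have Oo: "open (Ob z)" for z
    unfolding Ob_def using h continuous_on_open_vimage[OF open_UNIV, of h] by auto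
  have Oz: "z \<in> Ob z" for z unfolding Ob_def using e by simp
  have "\<forall>z. \<exists>V W. open V \<and> open W \<and> z \<in> V \<times> W \<and> V \<times> W \<subseteq> Ob z"
  proof
    fix z show "\<exists>V W. open V \<and> open W \<and> z \<in> V \<times> W \<and> V \<times> W \<subseteq> Ob z"
      using open_prod_elim[OF Oo Oz] by metis
  qed
  then obtain V W where VW: "\<And>z. open (V z) \<and> open (W z) \<and> z \<in> V z \<times> W z \<and> V z \<times> W z \<subseteq> Ob z"
    by metis
  have cov: "UNIV \<subseteq> (\<Union>z\<in>UNIV. V z \<times> W z)" using VW by blast
  have opn: "\<And>z. z \<in> UNIV \<Longrightarrow> open (V z \<times> W z)" using VW by (auto intro: open_Times)
  obtain C where C0: "C \<subseteq> UNIV" and C: "finite C" "UNIV \<subseteq> (\<Union>z\<in>C. V z \<times> W z)"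
    by (rule compactE_image[OF cpt opn cov])
  define al where "al a = {z\<in>C. a \<in> V z}" for a
  define be where "be b = {z\<in>C. b \<in> W z}" for b
  define K where "K = Pow C \<times> Pow C"
  define A where "A k = {a. al a = fst k}" for k :: "('a\<times>'b) set \<times> ('a\<times>'b) set"
  define A' where "A' k = {b. be b = snd k}" for k :: "('a\<times>'b) set \<times> ('a\<times>'b) set"
  define c where "c k = h (SOME z. z \<in> fst k \<inter> snd k)" for k :: "('a\<times>'b) set \<times> ('a\<times>'b) set"
  have fK: "finite K" unfolding K_def using C(1) by auto
  have Ab: "A k \<in> sets borel \<and> A' k \<in> sets borel" if k: "k \<in> K" for k
  proof
    have sub: "fst k \<subseteq> C" "snd k \<subseteq> C" using k unfolding K_def by auto
    have "A k = {a \<in> space borel. \<forall>z\<in>C. (a \<in> V z \<longleftrightarrow> z \<in> fst k)}"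
      unfolding A_def al_def using sub by auto
    also have "\<dots> \<in> sets borel"
    proof (rule sets.sets_Collect_finite_All[OF _ C(1)])
      fix z assume "z \<in> C"
      have "{a \<in> space borel. (a \<in> V z \<longleftrightarrow> z \<in> fst k)} = (if z \<in> fst k then V z else - V z)" by auto
      also have "\<dots> \<in> sets borel" using VW[of z] by (auto intro: borel_open borel_closed)
      finally show "{a \<in> space borel. (a \<in> V z \<longleftrightarrow> z \<in> fst k)} \<in> sets borel" .
    qed
    finally show "A k \<in> sets borel" .
    have "A' k = {b \<in> space borel. \<forall>z\<in>C. (b \<in> W z \<longleftrightarrow> z \<in> snd k)}"
      unfolding A'_def be_def using sub by auto
    also have "\<dots> \<in> sets borel"
    proof (rule sets.sets_Collect_finite_All[OF _ C(1)])
      fix z assume "z \<in> C"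
      have "{b \<in> space borel. (b \<in> W z \<longleftrightarrow> z \<in> snd k)} = (if z \<in> snd k then W z else - W z)" by auto
      also have "\<dots> \<in> sets borel" using VW[of z] by (auto intro: borel_open borel_closed)
      finally show "{b \<in> space borel. (b \<in> W z \<longleftrightarrow> z \<in> snd k)} \<in> sets borel" .
    qed
    finally show "A' k \<in> sets borel" .
  qed
  have approx: "\<bar>h z - (\<Sum>k\<in>K. c k * indicator (A k \<times> A' k) z)\<bar> \<le> e" for z
  proof -
    obtain a b where z: "z = (a, b)" by (cases z)
    let ?k = "(al a, be b)"
    have kK: "?k \<in> K" unfolding K_def al_def be_def by auto
    have "(\<Sum>k\<in>K. c k * indicator (A k \<times> A' k) z) = (\<Sum>k\<in>K. if k = ?k then c k else 0)"
      by (rule sum.cong[OF refl]) (auto simp: z A_def A'_def indicator_def)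
    also have "\<dots> = c ?k" using fK kK by simp
    finally have eq: "(\<Sum>k\<in>K. c k * indicator (A k \<times> A' k) z) = c ?k" .
    have "(a, b) \<in> (\<Union>z\<in>C. V z \<times> W z)" using C(2) by blast
    then obtain w0 where "w0 \<in> C" "(a, b) \<in> V w0 \<times> W w0" by blast
    then have "\<exists>w. w \<in> al a \<inter> be b" unfolding al_def be_def by blast
    define w where "w = (SOME w. w \<in> al a \<inter> be b)"
    have w: "w \<in> al a \<inter> be b" unfolding w_def by (rule someI_ex) fact
    have "z \<in> V w \<times> W w" using w unfolding al_def be_def z by auto
    then have "z \<in> Ob w" using VW[of w] by blast
    then have "\<bar>h z - h w\<bar> < e" unfolding Ob_def by (simp add: dist_real_def abs_minus_commute)
    moreover have "c ?k = h w" unfolding c_def w_def by simp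
    ultimately show ?thesis using eq by simp
  qed
  show ?thesis using fK Ab approx by blast
qed




lemma fm_int_bound:
  fixes g :: "'a \<Rightarrow> real"
  assumes fm: "finite_measure M" and g: "g \<in> borel_measurable M" and bd: "\<And>x. \<bar>g x\<bar> \<le> B"
    and one: "measure M (space M) \<le> 1" and B: "B \<ge> 0"
  shows "\<bar>integral\<^sup>L M g\<bar> \<le> B"
proof -
  interpret finite_measure M by (rule fm)
  have ig: "integrable M g" using g bd by (intro integrable_const_bound[of _ B]) auto
  have lo: "- B \<le> g x" and hi: "g x \<le> B" for x using bd[of x] unfolding abs_le_iff by linarith+
  have "integral\<^sup>L M g \<le> integral\<^sup>L M (\<lambda>_. B)"
    using ig lo hi by (intro integral_mono) auto
  also have "\<dots> = measure M (space M) * B" by simp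
  also have "\<dots> \<le> B" using one B by (simp add: mult_left_le_one_le)
  finally have 1: "integral\<^sup>L M g \<le> B" .
  have "integral\<^sup>L M (\<lambda>_. - B) \<le> integral\<^sup>L M g"
    using ig lo hi by (intro integral_mono) auto
  moreover have "integral\<^sup>L M (\<lambda>_. - B) = - (measure M (space M) * B)" by simp
  moreover have "measure M (space M) * B \<le> B" using one B by (simp add: mult_left_le_one_le)
  ultimately have 2: "- B \<le> integral\<^sup>L M g" by linarith
  show ?thesis using 1 2 by linarith
qed

lemma uniform_approx_cont:
  fixes F :: "'g::t2_space \<Rightarrow> real"
  assumes A: "\<And>e. e > 0 \<Longrightarrow> \<exists>T. continuous_on UNIV T \<and> (\<forall>y. \<bar>F y - T y\<bar> \<le> e)"
  shows "continuous_on UNIV F"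
proof (rule cont_from_eps)
  fix y0 :: 'g and e :: real assume e: "e > 0"
  obtain T where T: "continuous_on UNIV T" "\<And>y. \<bar>F y - T y\<bar> \<le> e/4"
    using A[of "e/4"] e by auto
  have "isCont T y0" using T(1) by (simp add: continuous_on_eq_continuous_at)
  then have Tl: "(T \<longlongrightarrow> T y0) (at y0)" by (simp add: continuous_at)
  have "eventually (\<lambda>y. dist (T y) (T y0) < e/4) (at y0)"
    using tendsto_iff[THEN iffD1, OF Tl, rule_format, of "e/4"] e by simp
  then show "eventually (\<lambda>y. \<bar>F y - F y0\<bar> < e) (at y0)"
  proof (rule eventually_mono)
    fix y assume "dist (T y) (T y0) < e/4"
    then have "\<bar>T y - T y0\<bar> < e/4" by (simp add: dist_real_def)
    then show "\<bar>F y - F y0\<bar> < e" using T(2)[of y] T(2)[of y0] e by linarith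
  qed
qed

context setting begin

lemma approx_step:
  fixes h :: "'a \<times> 'b \<Rightarrow> real"
  assumes cpt: "compact (UNIV :: ('a \<times> 'b) set)" and h: "continuous_on UNIV h" and e: "e > 0"
    and lim: "\<And>y. ((\<lambda>P. integral\<^sup>L (M y P) h) \<longlongrightarrow> F y) partition_net"
  shows "\<exists>T. continuous_on UNIV T \<and> (\<forall>y. \<bar>F y - T y\<bar> \<le> e)"
proof -
  obtain K A A' c where K: "finite (K :: (('a\<times>'b) set \<times> ('a\<times>'b) set) set)"
    and AB0: "\<forall>k\<in>K. A k \<in> sets borel \<and> A' k \<in> sets borel"
    and hh0: "\<forall>z. \<bar>h z - (\<Sum>k\<in>K. c k * indicator (A k \<times> A' k) z)\<bar> \<le> e/2"
    using rect_approx[OF cpt h half_gt_zero[OF e]] by blast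
  have AB: "\<And>k. k \<in> K \<Longrightarrow> A k \<in> sets borel \<and> A' k \<in> sets borel" using AB0 by blast
  have hh: "\<And>z. \<bar>h z - (\<Sum>k\<in>K. c k * indicator (A k \<times> A' k) z)\<bar> \<le> e/2" using hh0 by blast
  define S where "S = (\<Sum>k\<in>K. \<bar>c k\<bar>)"
  have S0: "S \<ge> 0" unfolding S_def by (simp add: sum_nonneg)
  define \<delta> where "\<delta> = e / (2 * (S + 1))"
  have d0: "\<delta> > 0" unfolding \<delta>_def using e S0 by simp
  have Sd: "S * \<delta> \<le> e/2"
  proof -
    have "S * \<delta> = (e/2) * (S / (S + 1))" unfolding \<delta>_def using S0 by (simp add: field_simps)
    also have "\<dots> \<le> (e/2) * 1" using S0 e by (intro mult_left_mono) auto
    finally show ?thesis by simp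
  qed
  have "\<forall>k\<in>K. \<exists>T. continuous_on UNIV T \<and> (\<forall>y. eventually (\<lambda>P. P \<in> borel_partitions \<and>
      \<bar>measure (M y P) (A k \<times> A' k) - T y\<bar> \<le> \<delta>) partition_net)"
  proof
    fix k assume k: "k \<in> K"
    show "\<exists>T. continuous_on UNIV T \<and> (\<forall>y. eventually (\<lambda>P. P \<in> borel_partitions \<and>
      \<bar>measure (M y P) (A k \<times> A' k) - T y\<bar> \<le> \<delta>) partition_net)"
      by (rule rect_lim[OF conjunct1[OF AB[OF k]] conjunct2[OF AB[OF k]] d0])
  qed
  from bchoice[OF this] obtain Tk where Tk0: "\<forall>k\<in>K. continuous_on UNIV (Tk k) \<and> (\<forall>y. eventually (\<lambda>P. P \<in> borel_partitions \<and>
      \<bar>measure (M y P) (A k \<times> A' k) - Tk k y\<bar> \<le> \<delta>) partition_net)" ..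
  have Tk1: "\<And>k. k \<in> K \<Longrightarrow> continuous_on UNIV (Tk k)" using Tk0 by blast
  have Tk2: "\<And>k y. k \<in> K \<Longrightarrow> eventually (\<lambda>P. P \<in> borel_partitions \<and>
      \<bar>measure (M y P) (A k \<times> A' k) - Tk k y\<bar> \<le> \<delta>) partition_net" using Tk0 by blast
  define T where "T y = (\<Sum>k\<in>K. c k * Tk k y)" for y
  have Tc: "continuous_on UNIV T" unfolding T_def
    using Tk1 by (intro continuous_on_sum continuous_on_mult continuous_on_const) auto
  have "\<bar>F y - T y\<bar> \<le> e" for y
  proof -
    have ev: "eventually (\<lambda>P. P \<in> borel_partitions \<and> (\<forall>k\<in>K.
        \<bar>measure (M y P) (A k \<times> A' k) - Tk k y\<bar> \<le> \<delta>)) partition_net"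
    proof -
      have e1: "eventually (\<lambda>P. \<forall>k\<in>K. P \<in> borel_partitions \<and>
        \<bar>measure (M y P) (A k \<times> A' k) - Tk k y\<bar> \<le> \<delta>) partition_net"
        by (rule eventually_ball_finite[OF K]) (rule ballI, rule Tk2)
      show ?thesis using eventually_conj[OF ev_bp e1] by (rule eventually_mono) blast
    qed
    have ev2: "eventually (\<lambda>P. \<bar>integral\<^sup>L (M y P) h - T y\<bar> \<le> e) partition_net"
      using ev
    proof (rule eventually_mono)
      fix P assume P: "P \<in> borel_partitions \<and> (\<forall>k\<in>K. \<bar>measure (M y P) (A k \<times> A' k) - Tk k y\<bar> \<le> \<delta>)"
      then have Pb: "P \<in> borel_partitions" by simp
      interpret fm: finite_measure "M y P" by (rule M_finite[OF Pb])
      let ?hh = "\<lambda>z. \<Sum>k\<in>K. c k * indicator (A k \<times> A' k) z"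
      have Rb: "k \<in> K \<Longrightarrow> A k \<times> A' k \<in> sets (M y P)" for k using AB[of k] by (simp add: borel_Times)
      have ik: "integrable (M y P) (\<lambda>z. c k * indicator (A k \<times> A' k) z)" if k: "k \<in> K" for k
        using Rb[OF k] by (intro Bochner_Integration.integrable_mult_right integrable_real_indicator) (auto simp: less_top[symmetric])
      have ihh: "integrable (M y P) ?hh"
        using ik by (rule Bochner_Integration.integrable_sum)
      have "integral\<^sup>L (M y P) ?hh = (\<Sum>k\<in>K. integral\<^sup>L (M y P) (\<lambda>z. c k * indicator (A k \<times> A' k) z))"
        using ik by (rule Bochner_Integration.integral_sum)
      also have "\<dots> = (\<Sum>k\<in>K. c k * measure (M y P) (A k \<times> A' k))"
        by (rule sum.cong[OF refl]) simp
      finally have Ihh: "integral\<^sup>L (M y P) ?hh = (\<Sum>k\<in>K. c k * measure (M y P) (A k \<times> A' k))" .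
      have hm: "h \<in> borel_measurable (M y P)"
      proof -
        have eqm: "borel_measurable (M y P) = borel_measurable borel" by (rule measurable_cong_sets) simp_all
        show ?thesis unfolding eqm by (rule borel_measurable_continuous_onI[OF h])
      qed
      have hhm: "?hh \<in> borel_measurable (M y P)" using ihh by (rule borel_measurable_integrable)
      have dm: "(\<lambda>z. h z - ?hh z) \<in> borel_measurable (M y P)" using hm hhm by (rule borel_measurable_diff)
      have idiff: "integrable (M y P) (\<lambda>z. h z - ?hh z)"
        using dm hh by (intro fm.integrable_const_bound[of _ "e/2"]) auto
      have ih: "integrable (M y P) h"
      proof -
        have "integrable (M y P) (\<lambda>z. (h z - ?hh z) + ?hh z)" using idiff ihh by (rule Bochner_Integration.integrable_add)
        then show ?thesis by simp
      qed
      have b1: "\<bar>integral\<^sup>L (M y P) (\<lambda>z. h z - ?hh z)\<bar> \<le> e/2"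
        using fm_int_bound[OF fm.finite_measure_axioms dm hh] M_total[OF Pb, of y] e by simp
      have eq1: "integral\<^sup>L (M y P) (\<lambda>z. h z - ?hh z) = integral\<^sup>L (M y P) h - integral\<^sup>L (M y P) ?hh"
        using ih ihh by (rule Bochner_Integration.integral_diff)
      have b2: "\<bar>(\<Sum>k\<in>K. c k * measure (M y P) (A k \<times> A' k)) - T y\<bar> \<le> e/2"
      proof -
        have "(\<Sum>k\<in>K. c k * measure (M y P) (A k \<times> A' k)) - T y = (\<Sum>k\<in>K. c k * (measure (M y P) (A k \<times> A' k) - Tk k y))"
          unfolding T_def by (simp add: sum_subtractf right_diff_distrib)
        also have "\<bar>\<dots>\<bar> \<le> (\<Sum>k\<in>K. \<bar>c k * (measure (M y P) (A k \<times> A' k) - Tk k y)\<bar>)" by (rule sum_abs)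
        also have "\<dots> \<le> (\<Sum>k\<in>K. \<bar>c k\<bar> * \<delta>)"
        proof (rule sum_mono)
          fix k assume "k \<in> K"
          then have "\<bar>measure (M y P) (A k \<times> A' k) - Tk k y\<bar> \<le> \<delta>" using P by blast
          then show "\<bar>c k * (measure (M y P) (A k \<times> A' k) - Tk k y)\<bar> \<le> \<bar>c k\<bar> * \<delta>"
            unfolding abs_mult by (intro mult_left_mono) auto
        qed
        also have "\<dots> = S * \<delta>" unfolding S_def by (simp add: sum_distrib_right)
        finally show ?thesis using Sd by linarith
      qed
      show "\<bar>integral\<^sup>L (M y P) h - T y\<bar> \<le> e" using b1 b2 eq1 Ihh by linarith
    qed
    have "((\<lambda>P. \<bar>integral\<^sup>L (M y P) h - T y\<bar>) \<longlongrightarrow> \<bar>F y - T y\<bar>) partition_net"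
      by (intro tendsto_intros lim)
    from tendsto_upperbound[OF this ev2 partition_net_nontrivial] show ?thesis .
  qed
  with Tc show ?thesis by blast
qed

end


theorem lemma3p6:
  fixes lam :: "'g::{topological_group_add, t2_space} measure"
    and f1 :: "'a::t2_space \<Rightarrow> 'g" and f2 :: "'b::t2_space \<Rightarrow> 'g"
    and mu1 :: "'a measure" and mu2 :: "'b measure"
    and nu :: "('a \<times> 'b) measure"
    and phi :: "'g \<Rightarrow> ('a \<times> 'b) measure"
  assumes "compact (UNIV :: 'a set)" and "compact (UNIV :: 'b set)"
    and "compact (UNIV :: 'g set)"
    and "haar_prob lam"
    and "continuous_on UNIV f1" and "surj f1"
    and "continuous_on UNIV f2" and "surj f2"
    and "regular_prob mu1" and "regular_prob mu2"
    and "distr mu1 borel f1 = lam" and "distr mu2 borel f2 = lam"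
    and "\<forall>e>0. \<forall>A\<in>sets borel. \<exists>B\<in>sets (borel :: 'g measure).
           measure mu1 ((A - f1 -` B) \<union> (f1 -` B - A)) < e"
    and "\<forall>e>0. \<forall>A\<in>sets borel. \<exists>B\<in>sets (borel :: 'g measure).
           measure mu2 ((A - f2 -` B) \<union> (f2 -` B - A)) < e"
    and "regular_prob nu"
    and "\<forall>D\<in>sets (mu1 \<Otimes>\<^sub>M mu2). emeasure nu D = emeasure (mu1 \<Otimes>\<^sub>M mu2) D"
    and "\<forall>y. regular_prob (phi y) \<and>
           weak_star_tendsto (mu_yE lam f1 f2 nu y) (phi y) partition_net"
  shows "weak_star_continuous phi"
proof -
  interpret setting lam f1 f2 mu1 mu2 nu
    by (rule setting.intro) (fact assms)+
  show ?thesis unfolding weak_star_continuous_def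
  proof (intro allI impI)
    fix h :: "'a \<times> 'b \<Rightarrow> real" assume h: "continuous_on UNIV h"
    have cpt: "compact (UNIV :: ('a \<times> 'b) set)" using compact_Times[OF assms(1) assms(2)] by simp
    have lim: "((\<lambda>P. integral\<^sup>L (M y P) h) \<longlongrightarrow> integral\<^sup>L (phi y) h) partition_net" for y
      using assms(17) h unfolding weak_star_tendsto_def by blast
    show "continuous_on UNIV (\<lambda>y. integral\<^sup>L (phi y) h)"
      by (rule uniform_approx_cont) (rule approx_step[OF cpt h _ lim])
  qed
qed

end
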